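(* Let $n\ge 1$. For $i,j\in\{1,\dots,n\}$ let $L_i>0$, $\mu_i>0$, $\theta_i\ge 0$, $\lambda_i\ge 0$ and $\gamma_{ij}\ge 0$ be real numbers with $\gamma_{ii}=0$ and $\gamma_{ij}=\gamma_{ji}$ for all $i,j$. Let $A$ be the $n\times n$ matrix with entries $$A_{ii}=-\Big(\frac{\mu_i}{L_i}+\theta_i+\sum_{j=1}^n\frac{\gamma_{ij}}{L_i}\Big),\qquad A_{ij}=\frac{\gamma_{ij}}{L_j}\quad (i\neq j),$$ and let $b\in\mathbb{R}^n$ have entries $b_i=\mu_i-\lambda_i$. Then $A$ is invertible and the equilibrium point $y^*=-A^{-1}b$ of the linear system of differential equations $y'(t)=Ay(t)+b$ is a stable equilibrium point.
   Context: The system models the inventory levels $y_i(t)$ of $n$ warehouses in one echelon: $L_i$ is the maximum inventory level, $\mu_i$ the maximum supply rate, $\theta_i$ the deterioration percentage per unit time, $\lambda_i$ the demand rate of warehouse $i$, and $\gamma_{ij}$ the maximum lateral transshipment rate from warehouse $i$ to $j$. Componentwise, $y_i'=(\mu_i-\lambda_i)-\big(\mu_i/L_i+\theta_i+\sum_j\gamma_{ij}/L_i\big)y_i+\sum_j(\gamma_{ij}/L_j)y_j$. *)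

theory Defs
  imports "HOL-Analysis.Analysis"
begin

definition is_solution :: "real^'n^'n \<Rightarrow> real^'n \<Rightarrow> (real \<Rightarrow> real^'n) \<Rightarrow> bool" where
  "is_solution A b y \<longleftrightarrow>
     (\<forall>t\<ge>0. (y has_vector_derivative (A *v y t + b)) (at t within {0..}))"

definition stable_equilibrium :: "real^'n^'n \<Rightarrow> real^'n \<Rightarrow> real^'n \<Rightarrow> bool" where
  "stable_equilibrium A b ys \<longleftrightarrow>
     A *v ys + b = 0 \<and>
     (\<forall>\<epsilon>>0. \<exists>\<delta>>0. \<forall>y. is_solution A b y \<and> norm (y 0 - ys) < \<delta> \<longrightarrow>
        (\<forall>t\<ge>0. norm (y t - ys) < \<epsilon>))"

end

theory Submission
  imports Defs
begin

lemma dsum_nonneg: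
  fixes g :: "'n::finite \<Rightarrow> 'n \<Rightarrow> real" and w :: "'n \<Rightarrow> real"
  assumes "\<And>i j. g i j \<ge> 0" and "\<And>i j. g i j = g j i"
  shows "(\<Sum>i\<in>UNIV. \<Sum>j\<in>UNIV. g i j * ((w i)^2 - w i * w j)) \<ge> 0"
proof -
  let ?X = "(\<Sum>i\<in>UNIV. \<Sum>j\<in>UNIV. g i j * ((w i)^2 - w i * w j))"
  have "?X = (\<Sum>j\<in>UNIV. \<Sum>i\<in>UNIV. g i j * ((w i)^2 - w i * w j))"
    by (rule sum.swap)
  also have "\<dots> = (\<Sum>i\<in>UNIV. \<Sum>j\<in>UNIV. g i j * ((w j)^2 - w i * w j))"
    using assms(2) by (simp add: mult.commute)
  finally have e: "?X = (\<Sum>i\<in>UNIV. \<Sum>j\<in>UNIV. g i j * ((w j)^2 - w i * w j))" .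
  have "2 * ?X = (\<Sum>i\<in>UNIV. \<Sum>j\<in>UNIV. g i j * ((w i)^2 - w i * w j) + g i j * ((w j)^2 - w i * w j))"
    by (subst mult_2, subst (2) e) (simp add: sum.distrib)
  also have "\<dots> = (\<Sum>i\<in>UNIV. \<Sum>j\<in>UNIV. g i j * (w i - w j)^2)"
    by (rule sum.cong[OF refl], rule sum.cong[OF refl]) (simp add: power2_eq_square algebra_simps)
  also have "\<dots> \<ge> 0" using assms(1) by (intro sum_nonneg mult_nonneg_nonneg) auto
  finally show ?thesis by simp
qed

theorem proposition2:
  fixes L \<mu> \<theta> lam :: "'n::finite \<Rightarrow> real" and \<gamma> :: "'n \<Rightarrow> 'n \<Rightarrow> real"
    and A :: "real^'n^'n" and b :: "real^'n"
  assumes "\<And>i. L i > 0" and "\<And>i. \<mu> i > 0" and "\<And>i. \<theta> i \<ge> 0" and "\<And>i. lam i \<ge> 0"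
    and "\<And>i j. \<gamma> i j \<ge> 0" and "\<And>i. \<gamma> i i = 0" and "\<And>i j. \<gamma> i j = \<gamma> j i"
    and "\<And>i. A $ i $ i = - (\<mu> i / L i + \<theta> i + (\<Sum>j\<in>UNIV. \<gamma> i j / L i))"
    and "\<And>i j. i \<noteq> j \<Longrightarrow> A $ i $ j = \<gamma> i j / L j"
    and "\<And>i. b $ i = \<mu> i - lam i"
  shows "invertible A \<and> stable_equilibrium A b (- (matrix_inv A *v b))"
proof -
  note Lp = assms(1)
  have Lnz: "L i \<noteq> 0" for i using Lp[of i] by simp
  have Q: "(\<Sum>i\<in>UNIV. (z$i / L i) * (A *v z)$i) \<le> - (\<Sum>i\<in>UNIV. \<mu> i * (z$i / L i)^2)" for z
  proof -
    define w where "w i = z$i / L i" for i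
    have zw: "z$i = L i * w i" for i using Lp[of i] by (simp add: w_def)
    have row: "(A *v z)$i = (\<Sum>j\<in>UNIV. \<gamma> i j * w j) + A$i$i * z$i" for i
    proof -
      have "(A *v z)$i = (\<Sum>j\<in>UNIV. \<gamma> i j * w j + (if j = i then A$i$i * z$i else 0))"
        unfolding matrix_vector_mult_def
        by (auto intro!: sum.cong simp: assms(6,9) zw Lnz)
      then show ?thesis by (simp add: sum.distrib)
    qed
    have termi: "w i * (A *v z)$i = - (\<mu> i + \<theta> i * L i) * (w i)^2
        - (\<Sum>j\<in>UNIV. \<gamma> i j * ((w i)^2 - w i * w j))" for i
    proof -
      have "w i * (A *v z)$i = (\<Sum>j\<in>UNIV. w i * (\<gamma> i j * w j))
         - (\<mu> i + \<theta> i * L i) * (w i)^2 - (\<Sum>j\<in>UNIV. \<gamma> i j / L i) * L i * (w i)^2"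
        using Lp[of i] unfolding row assms(8) zw
        by (simp add: sum_distrib_left power2_eq_square field_simps)
      also have "(\<Sum>j\<in>UNIV. \<gamma> i j / L i) * L i = (\<Sum>j\<in>UNIV. \<gamma> i j)"
        using Lp[of i] by (simp add: sum_divide_distrib[symmetric])
      finally show ?thesis
        by (simp add: sum_subtractf sum_distrib_left sum_distrib_right algebra_simps)
    qed
    have "(\<Sum>i\<in>UNIV. (z$i / L i) * (A *v z)$i) =
       (\<Sum>i\<in>UNIV. - (\<mu> i + \<theta> i * L i) * (w i)^2) - (\<Sum>i\<in>UNIV. \<Sum>j\<in>UNIV. \<gamma> i j * ((w i)^2 - w i * w j))"
      unfolding w_def[symmetric] termi by (simp add: sum_subtractf)
    also have "\<dots> \<le> (\<Sum>i\<in>UNIV. - (\<mu> i + \<theta> i * L i) * (w i)^2)"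
      using dsum_nonneg[of \<gamma> w, OF assms(5,7)] by simp
    also have "\<dots> \<le> (\<Sum>i\<in>UNIV. - \<mu> i * (w i)^2)"
    proof (rule sum_mono)
      fix i show "- (\<mu> i + \<theta> i * L i) * (w i)^2 \<le> - \<mu> i * (w i)^2"
        using assms(3)[of i] Lp[of i] by (simp add: algebra_simps)
    qed
    finally show ?thesis by (simp add: w_def sum_negf)
  qed
  have inv: "invertible A"
  proof -
    have "z = 0" if "A *v z = 0" for z
    proof -
      have "(\<Sum>i\<in>UNIV. \<mu> i * (z$i / L i)^2) \<le> 0" using Q[of z] that by simp
      moreover have "\<mu> i * (z$i / L i)^2 \<ge> 0" for i using assms(2)[of i] by simp
      ultimately have s0: "(\<Sum>i\<in>UNIV. \<mu> i * (z$i / L i)^2) = 0"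
        by (meson antisym sum_nonneg)
      have "\<mu> i * (z$i / L i)^2 = 0" for i
        using sum_nonneg_eq_0_iff[of UNIV "\<lambda>i. \<mu> i * (z$i / L i)^2"] s0
          \<open>\<And>i. \<mu> i * (z$i / L i)^2 \<ge> 0\<close> by auto
      then have "z$i = 0" for i using assms(2)[of i] Lp[of i] by force
      then show ?thesis by (simp add: vec_eq_iff)
    qed
    then show ?thesis
      by (simp add: invertible_left_inverse matrix_left_invertible_ker)
  qed
  define ys where "ys = - (matrix_inv A *v b)"
  have "A ** matrix_inv A = mat 1"
    using inv unfolding invertible_def matrix_inv_def by (rule someI_ex[THEN conjunct1])
  moreover have neg: "A *v (- x) = - (A *v x)" for x :: "real^'n"
    using matrix_vector_mult_diff_distrib[of A 0 x] by simp
  ultimately have eq: "A *v ys + b = 0"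
    by (simp add: ys_def matrix_vector_mul_assoc neg)
  define V where "V x = (\<Sum>i\<in>UNIV. (x$i)^2 / L i)" for x :: "real^'n"
  define Lmax where "Lmax = Max (range L)"
  define Lmin where "Lmin = Min (range L)"
  have Lmaxp: "L i \<le> Lmax" for i unfolding Lmax_def by simp
  have Lminp: "Lmin \<le> L i" for i unfolding Lmin_def by simp
  have Lmin0: "Lmin > 0" unfolding Lmin_def using Lp by (simp add: Min_gr_iff)
  have Lmax0: "Lmax > 0" using Lmaxp[of undefined] Lp[of undefined] by linarith
  have nsq: "(norm x)^2 = (\<Sum>i\<in>UNIV. (x$i)^2)" for x :: "real^'n"
    unfolding power2_norm_eq_inner inner_vec_def by (simp add: power2_eq_square)
  have Vlow: "(norm x)^2 \<le> Lmax * V x" for x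
  proof -
    have "(norm x)^2 = (\<Sum>i\<in>UNIV. Lmax * ((x$i)^2 / Lmax))" using Lmax0 by (simp add: nsq)
    also have "\<dots> \<le> (\<Sum>i\<in>UNIV. Lmax * ((x$i)^2 / L i))"
      using Lmax0 Lp Lmaxp by (intro sum_mono mult_left_mono divide_left_mono) (auto intro: mult_pos_pos)
    finally show ?thesis by (simp add: V_def sum_distrib_left)
  qed
  have Vup: "V x \<le> (norm x)^2 / Lmin" for x
  proof -
    have "V x \<le> (\<Sum>i\<in>UNIV. (x$i)^2 / Lmin)" unfolding V_def
      using Lmin0 Lp Lminp by (intro sum_mono divide_left_mono) (auto intro: mult_pos_pos)
    then show ?thesis by (simp add: nsq sum_divide_distrib)
  qed
  have decr: "V (y t - ys) \<le> V (y 0 - ys)" if sol: "is_solution A b y" and t: "t \<ge> 0" for y t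
  proof -
    define z where "z s = y s - ys" for s
    have zd: "(z has_vector_derivative (A *v z s)) (at s within {0..})" if "s \<ge> 0" for s
    proof -
      have "(z has_vector_derivative (A *v y s + b - 0)) (at s within {0..})"
        unfolding z_def using sol that unfolding is_solution_def
        by (intro derivative_intros) auto
      also have "A *v y s + b - 0 = A *v z s + (A *v ys + b)"
        by (simp add: z_def matrix_vector_mult_diff_distrib)
      finally show ?thesis using eq by simp
    qed
    have Vd: "((\<lambda>s. V (z s)) has_real_derivative (\<Sum>i\<in>UNIV. 2 * ((z s$i / L i) * (A *v z s)$i))) (at s within {0..})"
      if "s \<ge> 0" for s
    proof -
      have ci: "((\<lambda>s. z s $ i) has_real_derivative (A *v z s)$i) (at s within {0..})" for i
        using bounded_linear.has_vector_derivative[OF bounded_linear_vec_nth zd[OF that], of i]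
        by (simp add: has_real_derivative_iff_has_vector_derivative)
      have "((\<lambda>s. V (z s)) has_real_derivative (\<Sum>i\<in>UNIV. 2 * z s $ i * (A *v z s)$i / L i)) (at s within {0..})"
      proof -
        have "((\<lambda>s. (z s$i)^2 / L i) has_real_derivative (2 * z s $ i * (A *v z s)$i / L i)) (at s within {0..})" for i
          using DERIV_cdivide[OF DERIV_power[OF ci[of i], of 2], of "L i"] by (simp add: algebra_simps)
        then show ?thesis unfolding V_def by (intro DERIV_sum) auto
      qed
      then show ?thesis by (simp add: algebra_simps)
    qed
    show ?thesis
    proof (cases "t = 0")
      case True then show ?thesis by simp
    next
      case False
      with t have tp: "t > 0" by simp
      have "V (z t) \<le> V (z 0)"
      proof (rule DERIV_nonpos_imp_decreasing_open[of 0 t "\<lambda>s. V (z s)"])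
        show "0 \<le> t" using t .
        fix x assume x: "0 < x" "x < t"
        have "((\<lambda>s. V (z s)) has_real_derivative (\<Sum>i\<in>UNIV. 2 * ((z x$i / L i) * (A *v z x)$i))) (at x within {0<..})"
          using Vd[of x] x by (auto intro: has_field_derivative_subset)
        then have "((\<lambda>s. V (z s)) has_real_derivative (\<Sum>i\<in>UNIV. 2 * ((z x$i / L i) * (A *v z x)$i))) (at x)"
          using x by (simp add: at_within_open[of x "{0<..}"])
        moreover have "(\<Sum>i\<in>UNIV. 2 * ((z x$i / L i) * (A *v z x)$i)) \<le> 0"
        proof -
          have "(\<Sum>i\<in>UNIV. 2 * ((z x$i / L i) * (A *v z x)$i)) = 2 * (\<Sum>i\<in>UNIV. (z x$i / L i) * (A *v z x)$i)"
            by (simp add: sum_distrib_left)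
          also have "\<dots> \<le> 2 * - (\<Sum>i\<in>UNIV. \<mu> i * (z x$i / L i)^2)" using Q[of "z x"] by simp
          also have "\<dots> \<le> 0" using assms(2) by (simp add: sum_nonneg less_imp_le)
          finally show ?thesis .
        qed
        ultimately show "\<exists>y. ((\<lambda>s. V (z s)) has_real_derivative y) (at x) \<and> y \<le> 0" by blast
      next
        show "continuous_on {0..t} (\<lambda>s. V (z s))"
        proof (rule continuous_on_subset[of "{0..}"])
          show "continuous_on {0..} (\<lambda>s. V (z s))"
            unfolding continuous_on_eq_continuous_within
            using Vd by (auto intro: DERIV_continuous)
        qed auto
      qed
      then show ?thesis by (simp add: z_def)
    qed
  qed
  have "stable_equilibrium A b ys"
    unfolding stable_equilibrium_def
  proof (intro conjI eq allI impI)
    fix \<epsilon> :: real assume ep: "\<epsilon> > 0"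
    define \<delta> where "\<delta> = \<epsilon> * sqrt (Lmin / Lmax)"
    have dp: "\<delta> > 0" using ep Lmin0 Lmax0 by (simp add: \<delta>_def)
    have d2: "\<delta>^2 = \<epsilon>^2 * (Lmin / Lmax)"
      using Lmin0 Lmax0 by (simp add: \<delta>_def power_mult_distrib)
    show "\<exists>\<delta>>0. \<forall>y. is_solution A b y \<and> norm (y 0 - ys) < \<delta> \<longrightarrow> (\<forall>t\<ge>0. norm (y t - ys) < \<epsilon>)"
    proof (intro exI[of _ \<delta>] conjI dp allI impI)
      fix y and t :: real assume H: "is_solution A b y \<and> norm (y 0 - ys) < \<delta>" and t: "0 \<le> t"
      have "(norm (y 0 - ys))^2 < \<delta>^2"
        using H by (simp add: power_strict_mono)
      have "(norm (y t - ys))^2 \<le> Lmax * V (y t - ys)" by (rule Vlow)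
      also have "\<dots> \<le> Lmax * V (y 0 - ys)" using decr[of y t] H t Lmax0 by simp
      also have "\<dots> \<le> Lmax * ((norm (y 0 - ys))^2 / Lmin)" using mult_left_mono[OF Vup[of "y 0 - ys"], of Lmax] Lmax0 by simp
      also have "\<dots> < Lmax * (\<delta>^2 / Lmin)"
        using \<open>(norm (y 0 - ys))^2 < \<delta>^2\<close> Lmax0 Lmin0 by (simp add: divide_strict_right_mono)
      also have "\<dots> = \<epsilon>^2" using d2 Lmax0 Lmin0 by simp
      finally have "(norm (y t - ys))^2 < \<epsilon>^2" .
      then show "norm (y t - ys) < \<epsilon>" using ep by (simp add: power_less_imp_less_base)
    qed
  qed
  then show ?thesis using inv by (simp add: ys_def)
qed

end
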